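(* Let $n,d,r\in\mathbb N$ with $p=d\ge2$, let $\lambda_i\ge0$ and $\boldsymbol x_i\in\mathbb R^n_+$ with $\|\boldsymbol x_i\|_p=1$ for $i=1,\dots,r$. Then $$\Big\|\sum_{i=1}^r\lambda_i\,\boldsymbol x_i^{\otimes d}\Big\|_{p_*}=\sum_{i=1}^r\lambda_i.$$
   Context: $\boldsymbol x^{\otimes d}=\boldsymbol x\otimes\dots\otimes\boldsymbol x$ ($d$ factors). Tensor nuclear $p$-norm: $\|\mathcal T\|_{p_*}=\min\{\sum_{i}|\mu_i|:\mathcal T=\sum_{i=1}^s\mu_i\boldsymbol y_i^1\otimes\dots\otimes\boldsymbol y_i^d,\ \|\boldsymbol y_i^k\|_p=1,\ s\in\mathbb N\}$. *)

theory Defs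
  imports Complex_Main
begin

text \<open>Vectors in R^n are functions nat => real; only components 0..<n matter.
  Order-d tensors over R^n are functions on index lists of length d with entries < n.\<close>

definition pnorm :: "real \<Rightarrow> nat \<Rightarrow> (nat \<Rightarrow> real) \<Rightarrow> real" where
  "pnorm p n x = (\<Sum>j<n. \<bar>x j\<bar> powr p) powr (1 / p)"

definition tensor_indices :: "nat \<Rightarrow> nat \<Rightarrow> nat list set" where
  "tensor_indices n d = {idx. length idx = d \<and> set idx \<subseteq> {..<n}}"

definition outer :: "nat \<Rightarrow> (nat \<Rightarrow> nat \<Rightarrow> real) \<Rightarrow> nat list \<Rightarrow> real" where
  "outer d ys = (\<lambda>idx. \<Prod>k<d. ys k (idx ! k))"

definition tpow :: "nat \<Rightarrow> (nat \<Rightarrow> real) \<Rightarrow> nat list \<Rightarrow> real" where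
  "tpow d x = outer d (\<lambda>_. x)"

text \<open>Tensor nuclear p-norm: min (= Inf, the minimum being attained) of sum |mu_i|
  over all decompositions T = sum_{i<s} mu_i y_i^1 (x) ... (x) y_i^d with ||y_i^k||_p = 1.\<close>
definition nuclear_pnorm :: "real \<Rightarrow> nat \<Rightarrow> nat \<Rightarrow> (nat list \<Rightarrow> real) \<Rightarrow> real" where
  "nuclear_pnorm p n d T = Inf {\<Sum>i<s. \<bar>\<mu> i\<bar> | (s::nat) (\<mu>::nat \<Rightarrow> real) (y::nat \<Rightarrow> nat \<Rightarrow> nat \<Rightarrow> real).
      (\<forall>i<s. \<forall>k<d. pnorm p n (y i k) = 1) \<and>
      (\<forall>idx\<in>tensor_indices n d. T idx = (\<Sum>i<s. \<mu> i * outer d (y i) idx))}"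

end

theory Submission
  imports Defs "HOL-Analysis.Analysis"
begin

lemma root_pow_aux:
  fixes t :: real assumes "t \<ge> 0" "d > 0"
  shows "(t ^ d) powr (1 / real d) = t"
proof (cases "t = 0")
  case True then show ?thesis using assms by simp
next
  case False
  then have "t > 0" using assms by simp
  then have "t ^ d = t powr real d" by (simp add: powr_realpow)
  then show ?thesis using \<open>t > 0\<close> assms by (simp add: powr_powr)
qed

lemma amgm_aux:
  fixes a :: "nat \<Rightarrow> real"
  assumes "d > 0" "\<And>k. k < d \<Longrightarrow> a k \<ge> 0"
  shows "(\<Prod>k<d. a k) \<le> (\<Sum>k<d. a k ^ d) / real d"
proof -
  have "(\<Sum>k\<in>{..<d}. a k ^ d / card {..<d}) \<ge> (\<Prod>k\<in>{..<d}. a k ^ d) powr (1 / card {..<d})"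
    by (rule arith_geom_mean) (use assms in auto)
  moreover have "(\<Prod>k\<in>{..<d}. a k ^ d) = (\<Prod>k<d. a k) ^ d"
    by (simp add: prod_power_distrib)
  moreover have "((\<Prod>k<d. a k) ^ d) powr (1 / real d) = (\<Prod>k<d. a k)"
    by (rule root_pow_aux) (use assms in \<open>auto intro: prod_nonneg\<close>)
  moreover have "(\<Sum>k\<in>{..<d}. a k ^ d / card {..<d}) = (\<Sum>k<d. a k ^ d) / real d"
    by (simp add: sum_divide_distrib)
  ultimately show ?thesis by simp
qed

lemma pnorm_one:
  assumes "pnorm (real d) n y = 1" "d > 0"
  shows "(\<Sum>j<n. \<bar>y j\<bar> ^ d) = 1"
proof -
  define S where "S = (\<Sum>j<n. \<bar>y j\<bar> powr real d)"
  have S0: "S \<ge> 0" unfolding S_def by (simp add: sum_nonneg)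
  have "S powr (1 / real d) = 1" using assms unfolding pnorm_def S_def by simp
  then have "(S powr (1 / real d)) powr real d = 1" by simp
  then have "S = 1" using S0 assms by (simp add: powr_powr)
  moreover have "\<And>j. \<bar>y j\<bar> powr real d = \<bar>y j\<bar> ^ d"
  proof -
    fix j show "\<bar>y j\<bar> powr real d = \<bar>y j\<bar> ^ d"
      using assms(2) by (cases "y j = 0") (auto simp: powr_realpow)
  qed
  ultimately show ?thesis unfolding S_def by simp
qed

lemma holder_aux:
  fixes y :: "nat \<Rightarrow> nat \<Rightarrow> real"
  assumes "d > 0" "\<forall>k<d. pnorm (real d) n (y k) = 1"
  shows "\<bar>\<Sum>j<n. \<Prod>k<d. y k j\<bar> \<le> 1"
proof -
  have "\<bar>\<Sum>j<n. \<Prod>k<d. y k j\<bar> \<le> (\<Sum>j<n. \<bar>\<Prod>k<d. y k j\<bar>)"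
    by (rule sum_abs)
  also have "\<dots> = (\<Sum>j<n. \<Prod>k<d. \<bar>y k j\<bar>)"
    by (simp add: abs_prod)
  also have "\<dots> \<le> (\<Sum>j<n. (\<Sum>k<d. \<bar>y k j\<bar> ^ d) / real d)"
    by (rule sum_mono, rule amgm_aux) (use assms in auto)
  also have "\<dots> = (\<Sum>j<n. \<Sum>k<d. \<bar>y k j\<bar> ^ d / real d)"
    by (simp only: sum_divide_distrib)
  also have "\<dots> = (\<Sum>k<d. \<Sum>j<n. \<bar>y k j\<bar> ^ d / real d)"
    by (rule sum.swap)
  also have "\<dots> = (\<Sum>k<d. \<Sum>j<n. \<bar>y k j\<bar> ^ d) / real d"
    by (simp only: sum_divide_distrib)
  also have "\<dots> = (\<Sum>k<d. (1::real)) / real d"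
    using pnorm_one assms by (intro arg_cong[where f="\<lambda>t. t / real d"] sum.cong) auto
  also have "\<dots> = 1" using assms by simp
  finally show ?thesis .
qed

theorem corollary5p14:
  fixes n d r :: nat and lam :: "nat \<Rightarrow> real" and x :: "nat \<Rightarrow> nat \<Rightarrow> real"
  assumes "d \<ge> 2"
    and "\<forall>i<r. lam i \<ge> 0"
    and "\<forall>i<r. \<forall>j<n. x i j \<ge> 0"
    and "\<forall>i<r. pnorm (real d) n (x i) = 1"
  shows "nuclear_pnorm (real d) n d (\<lambda>idx. \<Sum>i<r. lam i * tpow d (x i) idx) = (\<Sum>i<r. lam i)"
proof -
  define T where "T = (\<lambda>idx. \<Sum>i<r. lam i * tpow d (x i) idx)"
  have d0: "d > 0" using assms(1) by simp
  let ?X = "{\<Sum>i<s. \<bar>\<mu> i\<bar> | (s::nat) (\<mu>::nat \<Rightarrow> real) (y::nat \<Rightarrow> nat \<Rightarrow> nat \<Rightarrow> real).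
      (\<forall>i<s. \<forall>k<d. pnorm (real d) n (y i k) = 1) \<and>
      (\<forall>idx\<in>tensor_indices n d. T idx = (\<Sum>i<s. \<mu> i * outer d (y i) idx))}"
  have rep: "replicate d j \<in> tensor_indices n d" if "j < n" for j
    using that unfolding tensor_indices_def by auto
  have outer_rep: "outer d z (replicate d j) = (\<Prod>k<d. z k j)" for z j
    unfolding outer_def by (intro prod.cong) auto
  have T_rep: "T (replicate d j) = (\<Sum>i<r. lam i * x i j ^ d)" for j
    unfolding T_def tpow_def outer_rep by simp
  have mem: "(\<Sum>i<r. lam i) \<in> ?X"
  proof -
    have "(\<Sum>i<r. lam i) = (\<Sum>i<r. \<bar>lam i\<bar>)" using assms(2) by (intro sum.cong) auto
    moreover have "\<forall>idx\<in>tensor_indices n d. T idx = (\<Sum>i<r. lam i * outer d (\<lambda>_. x i) idx)"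
      unfolding T_def tpow_def by simp
    moreover have "\<forall>i<r. \<forall>k<d. pnorm (real d) n ((\<lambda>i (_::nat). x i) i k) = 1"
      using assms(4) by simp
    ultimately show ?thesis
      by (intro CollectI exI[of _ r] exI[of _ lam] exI[of _ "\<lambda>i _. x i"] conjI) simp_all
  qed
  have lb: "(\<Sum>i<r. lam i) \<le> v" if "v \<in> ?X" for v
  proof -
    obtain s :: nat and \<mu> :: "nat \<Rightarrow> real" and y :: "nat \<Rightarrow> nat \<Rightarrow> nat \<Rightarrow> real" where v: "v = (\<Sum>i<s. \<bar>\<mu> i\<bar>)"
      and ny: "\<forall>i<s. \<forall>k<d. pnorm (real d) n (y i k) = 1"
      and dec: "\<forall>idx\<in>tensor_indices n d. T idx = (\<Sum>i<s. \<mu> i * outer d (y i) idx)"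
      using \<open>v \<in> ?X\<close> unfolding mem_Collect_eq by (elim exE conjE) fast
    have xn: "(\<Sum>j<n. x i j ^ d) = 1" if "i < r" for i
    proof -
      have "(\<Sum>j<n. \<bar>x i j\<bar> ^ d) = 1" using pnorm_one assms(4) d0 that by blast
      moreover have "(\<Sum>j<n. \<bar>x i j\<bar> ^ d) = (\<Sum>j<n. x i j ^ d)"
        using assms(3) that by (intro sum.cong) auto
      ultimately show ?thesis by simp
    qed
    have "(\<Sum>i<r. lam i) = (\<Sum>i<r. lam i * (\<Sum>j<n. x i j ^ d))"
      using xn by (intro sum.cong) auto
    also have "\<dots> = (\<Sum>i<r. \<Sum>j<n. lam i * x i j ^ d)"
      by (simp only: sum_distrib_left)
    also have "\<dots> = (\<Sum>j<n. \<Sum>i<r. lam i * x i j ^ d)"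
      by (rule sum.swap)
    also have "\<dots> = (\<Sum>j<n. T (replicate d j))"
      unfolding T_rep ..
    also have "\<dots> = (\<Sum>j<n. \<Sum>i<s. \<mu> i * (\<Prod>k<d. y i k j))"
      using dec rep outer_rep by (intro sum.cong) auto
    also have "\<dots> = (\<Sum>i<s. \<Sum>j<n. \<mu> i * (\<Prod>k<d. y i k j))"
      by (rule sum.swap)
    also have "\<dots> = (\<Sum>i<s. \<mu> i * (\<Sum>j<n. \<Prod>k<d. y i k j))"
      by (simp only: sum_distrib_left)
    also have "\<dots> \<le> (\<Sum>i<s. \<bar>\<mu> i\<bar>)"
    proof (rule sum_mono)
      fix i assume "i \<in> {..<s}"
      then have h: "\<bar>\<Sum>j<n. \<Prod>k<d. y i k j\<bar> \<le> 1" using holder_aux[OF d0, of n "y i"] ny by auto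
      have "\<mu> i * (\<Sum>j<n. \<Prod>k<d. y i k j) \<le> \<bar>\<mu> i\<bar> * \<bar>\<Sum>j<n. \<Prod>k<d. y i k j\<bar>"
        by (metis abs_ge_self abs_mult)
      also have "\<dots> \<le> \<bar>\<mu> i\<bar>" using h by (simp add: mult_left_le)
      finally show "\<mu> i * (\<Sum>j<n. \<Prod>k<d. y i k j) \<le> \<bar>\<mu> i\<bar>" .
    qed
    finally show ?thesis using v by simp
  qed
  have "Inf ?X = (\<Sum>i<r. lam i)" by (rule cInf_eq_minimum[OF mem lb])
  then show ?thesis unfolding nuclear_pnorm_def T_def .
qed

end
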